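(* For the Ces\`aro operator $\mathcal{C}$ acting from $H^\infty$ to the $\alpha$-Bloch space $\mathcal{B}^\alpha$: $$3\le\|\mathcal{C}\|_{H^\infty\to\mathcal{B}^\alpha}\le 4\quad\text{if }\alpha=1,\qquad \frac32\le\|\mathcal{C}\|_{H^\infty\to\mathcal{B}^\alpha}\le 4\quad\text{if }\alpha>1.$$ Moreover, $\mathcal{C}$ is not bounded from $H^\infty$ to $\mathcal{B}^\alpha$ when $0<\alpha<1$.
   Context: $\mathbb{D}$ is the open unit disc and $H(\mathbb{D})$ the space of analytic functions on $\mathbb{D}$. For $f(z)=\sum_{k\ge0}a_kz^k\in H(\mathbb{D})$ the Ces\`aro operator is $\mathcal{C}(f)(z)=\sum_{n\ge0}\Big(\frac{1}{n+1}\sum_{k=0}^n a_k\Big)z^n=\int_0^1\frac{f(tz)}{1-tz}\,dt$. $H^\infty$ is the space of bounded analytic functions on $\mathbb{D}$ with norm $\|f\|_\infty=\sup_{z\in\mathbb{D}}|f(z)|$. For $\alpha>0$ the $\alpha$-Bloch space $\mathcal{B}^\alpha$ consists of $f\in H(\mathbb{D})$ with $\sup_{z\in\mathbb{D}}(1-|z|^2)^\alpha|f'(z)|<\infty$, normed by $\|f\|_{\mathcal{B}^\alpha}=|f(0)|+\sup_{z\in\mathbb{D}}(1-|z|^2)^\alpha|f'(z)|$. Operator norms are $\|\mathcal{C}\|_{X\to Y}=\sup\{\|\mathcal{C}f\|_Y:\|f\|_X\le 1\}$. *)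

theory Defs
  imports "HOL-Analysis.Analysis"
begin

definition Hinf :: "(complex \<Rightarrow> complex) set" where
  "Hinf = {f. f holomorphic_on ball 0 1 \<and> bounded (f ` ball 0 1)}"

definition hinf_norm :: "(complex \<Rightarrow> complex) \<Rightarrow> real" where
  "hinf_norm f = (SUP z\<in>ball 0 1. norm (f z))"

definition cesaro :: "(complex \<Rightarrow> complex) \<Rightarrow> complex \<Rightarrow> complex" where
  "cesaro f z = integral {0..1::real} (\<lambda>t. f (of_real t * z) / (1 - of_real t * z))"

text \<open>The alpha-Bloch norm, valued in the extended reals (infinite iff the function
  is not in the alpha-Bloch space).\<close>
definition bloch_norm :: "real \<Rightarrow> (complex \<Rightarrow> complex) \<Rightarrow> ereal" where
  "bloch_norm \<alpha> g = ereal (norm (g 0)) +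
     (SUP z\<in>ball 0 1. ereal ((1 - (norm z)\<^sup>2) powr \<alpha> * norm (deriv g z)))"

text \<open>Operator norm of the Cesaro operator from H-infinity to the alpha-Bloch space
  (infinite iff the operator is unbounded).\<close>
definition cesaro_opnorm :: "real \<Rightarrow> ereal" where
  "cesaro_opnorm \<alpha> = (SUP f\<in>{f\<in>Hinf. hinf_norm f \<le> 1}. bloch_norm \<alpha> (cesaro f))"

end

theory Submission imports Defs "HOL-Complex_Analysis.Complex_Analysis" "HOL-Real_Asymp.Real_Asymp"
begin

lemma schwarz_pick_weak:
  assumes hol: "f holomorphic_on ball 0 1"
    and bd: "\<And>z. z \<in> ball 0 1 \<Longrightarrow> norm (f z) \<le> 1"
    and w: "norm w < 1"
  shows "norm (deriv f w) * (1 - norm w ^ 2) \<le> 1"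
proof -
  define \<phi> where "\<phi> = Moebius_function 0 (-w)"
  have phi_eq: "\<phi> z = (z + w) / (1 + cnj w * z)" for z
    by (simp add: \<phi>_def Moebius_function_def)
  have phi_hol: "\<phi> holomorphic_on ball 0 1"
    unfolding \<phi>_def by (rule Moebius_function_holomorphic) (use w in simp)
  have phi_in: "\<phi> z \<in> ball 0 1" if "z \<in> ball 0 1" for z
    unfolding \<phi>_def using Moebius_function_norm_lt_1[of "-w" z 0] w that by simp
  define G where "G = f \<circ> \<phi>"
  have G_hol: "G holomorphic_on ball 0 1"
    unfolding G_def by (rule holomorphic_on_compose_gen[OF phi_hol hol]) (use phi_in in auto)
  have d\<phi>: "(\<phi> has_field_derivative (1 - cnj w * w)) (at 0)"
  proof -
    have "((\<lambda>z. (z + w) / (1 + cnj w * z)) has_field_derivative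
        ((1 * (1 + cnj w * 0) - (0 + w) * cnj w) / (1 + cnj w * 0)^2)) (at 0)"
      by (rule derivative_eq_intros refl | simp)+
    moreover have "\<phi> = (\<lambda>z. (z + w) / (1 + cnj w * z))" using phi_eq by auto
    ultimately show ?thesis by (simp add: algebra_simps)
  qed
  have \<phi>0: "\<phi> 0 = w" by (simp add: phi_eq)
  have df: "(f has_field_derivative deriv f w) (at w)"
    using hol w by (intro holomorphic_derivI[of f "ball 0 1"]) auto
  have dG: "(G has_field_derivative deriv f w * (1 - cnj w * w)) (at 0)"
    unfolding G_def using DERIV_chain[of f "deriv f w" \<phi> 0] df d\<phi> \<phi>0 by simp
  have nm: "norm (deriv G 0) = norm (deriv f w) * (1 - norm w ^ 2)"
  proof -
    have e: "1 - cnj w * w = complex_of_real (1 - norm w ^ 2)"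
      using complex_norm_square[of w] by simp
    have d: "deriv G 0 = deriv f w * complex_of_real (1 - norm w ^ 2)"
      using DERIV_imp_deriv[OF dG] e by (simp only:)
    have "norm w ^ 2 \<le> 1" using w by (simp add: power_le_one)
    then show ?thesis unfolding d norm_mult norm_of_real by simp
  qed
  have le: "norm (deriv G 0) \<le> 1 / s" if s: "0 < s" "s < 1" for s
  proof -
    have "norm ((deriv ^^ 1) G 0) \<le> fact 1 * 1 / s ^ 1"
    proof (rule Cauchy_inequality)
      show "G holomorphic_on ball 0 s" using G_hol by (rule holomorphic_on_subset) (use s in auto)
      show "continuous_on (cball 0 s) G"
        using G_hol by (intro holomorphic_on_imp_continuous_on) (rule holomorphic_on_subset, use s in auto)
      show "0 < s" by fact
      show "norm (G x) \<le> 1" if "norm (0 - x) = s" for x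
        unfolding G_def using bd phi_in that s by auto
    qed
    then show ?thesis by simp
  qed
  show ?thesis
  proof (rule ccontr)
    assume "\<not> ?thesis"
    then have gt: "norm (deriv G 0) > 1" using nm by simp
    define a where "a = norm (deriv G 0)"
    have a1: "a > 1" using gt a_def by simp
    define b where "b = 1 / a"
    define s where "s = (1 + b) / 2"
    have ia: "0 < b" "b < 1" using a1 by (auto simp: divide_less_eq b_def)
    have s1: "0 < s" using ia unfolding s_def by (simp add: field_simps)
    have s2: "s < 1" using ia unfolding s_def by (simp add: field_simps)
    have s3: "b < s" using ia unfolding s_def by (simp add: field_simps)
    note s = s1 s2 s3
    have "a \<le> 1 / s" using le s a_def by auto
    moreover have "1 / s < a"
    proof -
      have "a * b < a * s" using s a1 by (intro mult_strict_left_mono) auto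
      then have "1 < s * a" using a1 by (simp add: mult.commute b_def)
      then show ?thesis using s by (simp add: divide_less_eq mult.commute)
    qed
    ultimately show False by simp
  qed
qed


lemma tz_in_ball:
  assumes "z \<in> ball (0::complex) 1" "t \<in> {0..1::real}"
  shows "of_real t * z \<in> ball (0::complex) 1"
proof -
  have "norm (of_real t * z) = t * norm z" using assms by (simp add: norm_mult)
  also have "\<dots> \<le> norm z" using assms by (simp add: mult_left_le_one_le)
  finally show ?thesis using assms by simp
qed

lemma one_minus_nz:
  assumes "w \<in> ball (0::complex) 1"
  shows "1 - w \<noteq> 0"
  using assms by auto

lemma quot_alg:
  fixes A B T u :: complex
  assumes "u \<noteq> 0"
  shows "(A * T * u - B * (0 - T * 1)) / (u * u) = T * (A / u + B / u^2)"
  using assms by (simp add: field_simps power2_eq_square)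

lemma cesaro_has_deriv:
  fixes f :: "complex \<Rightarrow> complex" and z :: complex
  assumes hol: "f holomorphic_on ball 0 1" and z: "z \<in> ball 0 1"
  shows "(cesaro f has_field_derivative
     integral {0..1} (\<lambda>t. of_real t * (deriv f (of_real t * z) / (1 - of_real t * z)
        + f (of_real t * z) / (1 - of_real t * z)^2))) (at z)"
proof -
  define F where "F = (\<lambda>x (t::real). f (of_real t * x) / (1 - of_real t * x))"
  define Fx where "Fx = (\<lambda>x (t::real). of_real t * (deriv f (of_real t * x) / (1 - of_real t * x)
        + f (of_real t * x) / (1 - of_real t * x)^2))"
  have ces: "cesaro f = (\<lambda>x. integral (cbox 0 1) (F x))"
    by (auto simp: cesaro_def F_def fun_eq_iff cbox_interval)
  have contf: "continuous_on (ball 0 1) f" using hol by (rule holomorphic_on_imp_continuous_on)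
  have contdf: "continuous_on (ball 0 1) (deriv f)"
    using hol by (intro holomorphic_on_imp_continuous_on holomorphic_deriv) auto
  have "((\<lambda>x. integral (cbox 0 1) (F x)) has_field_derivative integral (cbox 0 1) (Fx z)) (at z within ball 0 1)"
  proof (rule leibniz_rule_field_derivative)
    fix x :: complex and t :: real assume x: "x \<in> ball 0 1" and t: "t \<in> cbox (0::real) 1"
    then have tx: "of_real t * x \<in> ball 0 1" using tz_in_ball by (auto simp: cbox_interval)
    have df: "(f has_field_derivative deriv f (of_real t * x)) (at (of_real t * x))"
      using hol tx by (intro holomorphic_derivI[of f "ball 0 1"]) auto
    have d1: "((\<lambda>x. f (of_real t * x)) has_field_derivative deriv f (of_real t * x) * of_real t) (at x)"
      by (rule DERIV_chain2[of f _ "\<lambda>x. of_real t * x", OF df]) (rule derivative_eq_intros refl | simp)+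
    have nz: "1 - of_real t * x \<noteq> 0" using one_minus_nz[OF tx] .
    have "((\<lambda>x. f (of_real t * x) / (1 - of_real t * x)) has_field_derivative
       (deriv f (of_real t * x) * of_real t * (1 - of_real t * x) - f (of_real t * x) * (0 - of_real t * 1)) / ((1 - of_real t * x) * (1 - of_real t * x))) (at x)"
    proof (rule DERIV_divide[OF d1])
      show "((\<lambda>x. 1 - of_real t * x) has_field_derivative (0 - of_real t * 1)) (at x)"
        by (rule derivative_eq_intros refl | simp)+
    qed (use nz in simp)
    moreover have "(deriv f (of_real t * x) * of_real t * (1 - of_real t * x) - f (of_real t * x) * (0 - of_real t * 1)) / ((1 - of_real t * x) * (1 - of_real t * x)) = Fx x t"
      unfolding Fx_def by (rule quot_alg[OF nz])
    ultimately show "((\<lambda>x. F x t) has_field_derivative Fx x t) (at x within ball 0 1)"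
      by (simp add: F_def has_field_derivative_at_within)
  next
    fix x assume x: "x \<in> ball (0::complex) 1"
    have cf: "continuous_on {0..1::real} (\<lambda>t. f (of_real t * x))"
      by (rule continuous_on_compose2[OF contf]) (auto intro!: continuous_intros tz_in_ball x)
    have nz: "1 - of_real t * x \<noteq> 0" if "t \<in> {0..1}" for t
      using one_minus_nz tz_in_ball that x by blast
    have "continuous_on {0..1::real} (\<lambda>t. f (of_real t * x) / (1 - of_real t * x))"
      by (intro continuous_intros cf) (use nz in auto)
    then show "F x integrable_on cbox 0 1"
      by (simp add: F_def cbox_interval integrable_continuous_real)
  next
    have sub: "(\<lambda>p. of_real (snd p) * fst p) ` (ball 0 1 \<times> cbox 0 1) \<subseteq> ball (0::complex) 1"
      using tz_in_ball by (auto simp: cbox_interval)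
    have c0: "continuous_on (ball 0 1 \<times> cbox 0 1) (\<lambda>p::complex\<times>real. of_real (snd p) * fst p)"
      by (intro continuous_intros)
    have c1: "continuous_on (ball 0 1 \<times> cbox 0 1) (\<lambda>p::complex\<times>real. f (of_real (snd p) * fst p))"
      by (rule continuous_on_compose2[OF contf c0 sub])
    have c2: "continuous_on (ball 0 1 \<times> cbox 0 1) (\<lambda>p::complex\<times>real. deriv f (of_real (snd p) * fst p))"
      by (rule continuous_on_compose2[OF contdf c0 sub])
    have nz: "1 - of_real (snd p) * fst p \<noteq> 0" if "p \<in> ball 0 1 \<times> cbox 0 1" for p :: "complex \<times> real"
      using sub that one_minus_nz by blast
    have "continuous_on (ball 0 1 \<times> cbox 0 1) (\<lambda>p::complex\<times>real. Fx (fst p) (snd p))"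
      unfolding Fx_def by (intro continuous_intros c1 c2) (use nz in auto)
    then show "continuous_on (ball 0 1 \<times> cbox 0 1) (\<lambda>(x, t). Fx x t)"
      by (simp add: case_prod_beta')
  qed (use z in auto)
  then show ?thesis
    by (simp add: ces at_within_open[OF z] Fx_def cbox_interval)
qed


lemma int_inv_sq:
  fixes r :: real
  assumes r: "0 \<le> r" "r < 1"
  shows "((\<lambda>t. 1 / (1 - t * r)^2) has_integral 1 / (1 - r)) {0..1}"
proof -
  have pos: "0 < 1 - t * r" if "t \<in> {0..1}" for t
  proof -
    have "t * r \<le> r" using that r by (simp add: mult_left_le_one_le)
    then show ?thesis using r by linarith
  qed
  have "((\<lambda>t. 1 / (1 - t * r)^2) has_integral ((\<lambda>t. t / (1 - t * r)) 1 - (\<lambda>t. t / (1 - t * r)) 0)) {0..1}"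
  proof (rule fundamental_theorem_of_calculus)
    fix t :: real assume t: "t \<in> {0..1}"
    have nz: "1 - t * r \<noteq> 0" using pos[OF t] by simp
    have "((\<lambda>t. t / (1 - t * r)) has_real_derivative (1 * (1 - t * r) - t * (0 - 1 * r)) / ((1 - t * r) * (1 - t * r))) (at t)"
      by (rule derivative_eq_intros refl | use nz in simp)+
    moreover have "(1 * (1 - t * r) - t * (0 - 1 * r)) / ((1 - t * r) * (1 - t * r)) = 1 / (1 - t * r)^2"
      by (simp add: power2_eq_square algebra_simps)
    ultimately show "((\<lambda>t. t / (1 - t * r)) has_vector_derivative 1 / (1 - t * r)^2) (at t within {0..1})"
      by (simp add: has_real_derivative_iff_has_vector_derivative[symmetric] has_field_derivative_at_within)
  qed simp
  then show ?thesis by simp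
qed

lemma pointwise_bound:
  fixes a b d t r :: real
  assumes r: "0 \<le> r" "r < 1" and t: "0 \<le> t" "t \<le> 1"
    and a: "0 \<le> a" "a * (1 - (t * r)^2) \<le> 1" and b: "0 \<le> b" "b \<le> 1"
    and d: "1 - t * r \<le> d"
  shows "t * (a / d + b / d^2) \<le> (2 + r) / (1 + r) * (1 / (1 - t * r)^2)"
proof -
  define u where "u = 1 - t * r"
  have tr: "t * r \<le> r" using t r by (simp add: mult_left_le_one_le)
  have u: "0 < u" "u \<le> d" using tr r d by (auto simp: u_def)
  have tr0: "0 \<le> t * r" using t r by simp
  have "1 - (t * r)^2 = u * (1 + t * r)" by (simp add: u_def power2_eq_square algebra_simps)
  then have a2: "a \<le> 1 / (u * (1 + t * r))"
    using a u tr0 by (simp add: le_divide_eq mult.commute)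
  have "a / d \<le> a / u" using a u by (simp add: divide_left_mono)
  also have "\<dots> \<le> 1 / (u * (1 + t * r)) / u" by (rule divide_right_mono[OF a2]) (use u in simp)
  finally have A: "a / d \<le> 1 / (u^2 * (1 + t * r))" by (simp add: power2_eq_square mult_ac)
  have "b / d^2 \<le> 1 / d^2" using b u by (simp add: divide_right_mono)
  also have "\<dots> \<le> 1 / u^2" using u by (intro divide_left_mono power_mono mult_pos_pos) auto
  finally have B: "b / d^2 \<le> 1 / u^2" .
  have "t * (a / d + b / d^2) \<le> t * (1 / (u^2 * (1 + t * r)) + 1 / u^2)"
    using A B t by (intro mult_left_mono) auto
  also have "\<dots> = (t / (1 + t * r) + t) / u^2"
  proof -
    have gen: "t * (1 / (v * p) + 1 / v) = (t / p + t) / v" if "p \<noteq> 0" "v \<noteq> 0" for p v :: real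
      using that by (simp add: field_simps)
    have "1 + t * r \<noteq> 0" "u^2 \<noteq> 0" using u tr0 by auto
    then show ?thesis by (rule gen)
  qed
  also have "\<dots> \<le> (1 / (1 + r) + 1) / u^2"
  proof -
    have "t * (1 + r) \<le> 1 + t * r" using t by (simp add: algebra_simps)
    then have "t / (1 + t * r) \<le> 1 / (1 + r)" using tr0 r by (simp add: field_simps)
    then show ?thesis using t u by (intro divide_right_mono) auto
  qed
  also have "\<dots> = (2 + r) / (1 + r) * (1 / (1 - t * r)^2)"
    using r by (simp add: u_def field_simps)
  finally show ?thesis .
qed


lemma cesaro_deriv_bound:
  fixes f :: "complex \<Rightarrow> complex" and z :: complex
  assumes hol: "f holomorphic_on ball 0 1"
    and bd: "\<And>z. z \<in> ball 0 1 \<Longrightarrow> norm (f z) \<le> 1"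
    and z: "z \<in> ball 0 1"
  shows "norm (deriv (cesaro f) z) \<le> (2 + norm z) / (1 - norm z ^ 2)"
proof -
  define r where "r = norm z"
  have r: "0 \<le> r" "r < 1" using z by (auto simp: r_def)
  define Fz where "Fz = (\<lambda>t::real. of_real t * (deriv f (of_real t * z) / (1 - of_real t * z)
        + f (of_real t * z) / (1 - of_real t * z)^2))"
  have dz: "deriv (cesaro f) z = integral {0..1} Fz"
    unfolding Fz_def by (rule DERIV_imp_deriv[OF cesaro_has_deriv[OF hol z]])
  define g where "g = (\<lambda>t::real. (2 + r) / (1 + r) * (1 / (1 - t * r)^2))"
  have gi: "(g has_integral (2 + r) / (1 + r) * (1 / (1 - r))) {0..1}"
    unfolding g_def by (rule has_integral_mult_right[OF int_inv_sq[OF r]])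
  have gval: "(2 + r) / (1 + r) * (1 / (1 - r)) = (2 + r) / (1 - r^2)"
    using r by (simp add: field_simps power2_eq_square)
  have pw: "norm (Fz t) \<le> g t" if t: "t \<in> {0..1}" for t
  proof -
    define w where "w = of_real t * z"
    have w: "w \<in> ball 0 1" unfolding w_def using tz_in_ball[OF z t] .
    have nw: "norm w = t * r" using t by (simp add: w_def r_def norm_mult)
    have sp: "norm (deriv f w) * (1 - (t * r)^2) \<le> 1"
      using schwarz_pick_weak[OF hol bd] w nw by (metis mem_ball_0)
    have d: "1 - t * r \<le> norm (1 - w)"
      using norm_triangle_ineq2[of 1 w] nw by simp
    have "norm (Fz t) \<le> t * (norm (deriv f w) / norm (1 - w) + norm (f w) / norm (1 - w)^2)"
    proof -
      have "norm (Fz t) = t * norm (deriv f w / (1 - w) + f w / (1 - w)^2)"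
        using t by (simp add: Fz_def w_def[symmetric] norm_mult)
      also have "\<dots> \<le> t * (norm (deriv f w / (1 - w)) + norm (f w / (1 - w)^2))"
        using t by (intro mult_left_mono norm_triangle_ineq) auto
      finally show ?thesis by (simp add: norm_divide norm_power)
    qed
    also have "\<dots> \<le> g t"
      unfolding g_def
      by (rule pointwise_bound) (use r t sp d bd[OF w] in auto)
    finally show ?thesis .
  qed
  show ?thesis
  proof (cases "Fz integrable_on {0..1}")
    case True
    have "norm (integral {0..1} Fz) \<le> integral {0..1} g"
      by (rule integral_norm_bound_integral[OF True has_integral_integrable[OF gi] pw])
    also have "\<dots> = (2 + r) / (1 - r^2)" using gi gval integral_unique by metis
    finally show ?thesis by (simp add: dz r_def)
  next
    case False
    then have "deriv (cesaro f) z = 0" by (simp add: dz not_integrable_integral)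
    moreover have "0 \<le> (2 + r) / (1 - r^2)" using r by (simp add: abs_square_less_1 power_le_one)
    ultimately show ?thesis by (simp add: r_def)
  qed
qed


definition Jf :: "real \<Rightarrow> real" where
  "Jf x = (1 / x^2) * (x / (1 - x) + ln (1 - x))"

lemma J_integral:
  fixes x :: real
  assumes x: "0 < x" "x < 1"
  shows "((\<lambda>t. t / (1 - t * x)^2) has_integral Jf x) {0..1}"
proof -
  define F where "F = (\<lambda>t. (1 / x^2) * (1 / (1 - t * x) + ln (1 - t * x)))"
  have pos: "0 < 1 - t * x" if "t \<in> {0..1}" for t
  proof -
    have "t * x \<le> x" using that x by (simp add: mult_left_le_one_le)
    then show ?thesis using x by linarith
  qed
  have "((\<lambda>t. t / (1 - t * x)^2) has_integral (F 1 - F 0)) {0..1}"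
  proof (rule fundamental_theorem_of_calculus)
    fix t :: real assume t: "t \<in> {0..1}"
    have p: "0 < 1 - t * x" using pos[OF t] .
    have "(F has_real_derivative (1 / x^2) * ((0 * (1 - t * x) - 1 * (0 - 1 * x)) / ((1 - t * x) * (1 - t * x)) + (0 - 1 * x) / (1 - t * x))) (at t)"
      unfolding F_def by (rule derivative_eq_intros refl | use p in simp)+
    moreover have "(1 / x^2) * ((0 * (1 - t * x) - 1 * (0 - 1 * x)) / ((1 - t * x) * (1 - t * x)) + (0 - 1 * x) / (1 - t * x)) = t / (1 - t * x)^2"
    proof -
      have gen: "(1 / x^2) * ((0 * u - 1 * (0 - 1 * x)) / (u * u) + (0 - 1 * x) / u) = (1 - u) / x / u^2" if "u \<noteq> 0" for u
        using that x by (simp add: field_simps power2_eq_square)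
      have "(1 - (1 - t * x)) / x = t" using x by simp
      then show ?thesis using gen[of "1 - t * x"] p by simp
    qed
    ultimately show "(F has_vector_derivative t / (1 - t * x)^2) (at t within {0..1})"
      by (simp add: has_real_derivative_iff_has_vector_derivative[symmetric] has_field_derivative_at_within)
  qed simp
  moreover have "F 1 - F 0 = Jf x"
    using x by (simp add: F_def Jf_def field_simps)
  ultimately show ?thesis by simp
qed

lemma J_nonneg:
  assumes "0 < x" "x < 1" shows "0 \<le> Jf x"
  by (rule has_integral_nonneg[OF J_integral[OF assms]]) auto

lemma one_in_ball_set: "(\<lambda>_. 1) \<in> {f\<in>Hinf. hinf_norm f \<le> 1}"
proof -
  have "(\<lambda>_::complex. 1::complex) ` ball 0 1 = {1}" using image_eqI[of 1 "\<lambda>_::complex. 1::complex" 0 "ball 0 1"] by auto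
  then have "bounded ((\<lambda>_::complex. 1::complex) ` ball 0 1)" by (simp only:) simp
  then show ?thesis by (auto simp: Hinf_def hinf_norm_def)
qed

lemma cesaro_one_0: "cesaro (\<lambda>_. 1) 0 = 1"
  by (simp add: cesaro_def)

lemma deriv_cesaro_one_real:
  fixes x :: real
  assumes x: "0 < x" "x < 1"
  shows "deriv (cesaro (\<lambda>_. 1)) (of_real x) = of_real (Jf x)"
proof -
  have z: "complex_of_real x \<in> ball 0 1" using x by simp
  have "deriv (cesaro (\<lambda>_. 1)) (of_real x) = integral {0..1} (\<lambda>t. of_real t * (deriv (\<lambda>_. 1) (of_real t * of_real x) / (1 - of_real t * of_real x)
        + 1 / (1 - of_real t * of_real x)^2))"
    by (rule DERIV_imp_deriv[OF cesaro_has_deriv[OF _ z]]) auto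
  also have "(\<lambda>t. of_real t * (deriv (\<lambda>_. 1) (of_real t * of_real x) / (1 - of_real t * of_real x)
        + 1 / (1 - of_real t * of_real x)^2)) = (\<lambda>t. complex_of_real (t / (1 - t * x)^2))"
    by (simp add: fun_eq_iff)
  also have "integral {0..1} \<dots> = of_real (Jf x)"
    by (rule integral_unique[OF has_integral_of_real[OF J_integral[OF x]]])
  finally show ?thesis .
qed

lemma deriv_cesaro_one_0: "deriv (cesaro (\<lambda>_. 1)) 0 = 1 / 2"
proof -
  have "deriv (cesaro (\<lambda>_. 1)) 0 = integral {0..1} (\<lambda>t. of_real t * (deriv (\<lambda>_. 1) (of_real t * 0) / (1 - of_real t * 0)
        + 1 / (1 - of_real t * 0)^2))"
    by (rule DERIV_imp_deriv[OF cesaro_has_deriv]) auto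
  also have "(\<lambda>t::real. of_real t * (deriv (\<lambda>_. 1) (of_real t * 0) / (1 - of_real t * 0)
        + 1 / (1 - of_real t * (0::complex))^2)) = (\<lambda>t. complex_of_real t)"
    by (simp add: fun_eq_iff)
  also have "integral {0..1} \<dots> = of_real (1 / 2)"
  proof (rule integral_unique[OF has_integral_of_real])
    have "((\<lambda>t::real. t) has_integral ((\<lambda>t. t^2 / 2) 1 - (\<lambda>t. t^2 / 2) 0)) {0..1}"
    proof (rule fundamental_theorem_of_calculus)
      fix t :: real assume "t \<in> {0..1}"
      have "((\<lambda>t::real. t^2 / 2) has_real_derivative t) (at t)"
        by (rule derivative_eq_intros refl | simp)+
      then show "((\<lambda>t. t^2 / 2) has_vector_derivative t) (at t within {0..1})"
        by (simp add: has_real_derivative_iff_has_vector_derivative[symmetric] has_field_derivative_at_within)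
    qed simp
    then show "((\<lambda>t::real. t) has_integral 1 / 2) {0..1}" by simp
  qed
  finally show ?thesis by simp
qed


lemma hinf_pointwise:
  assumes "f \<in> Hinf" "hinf_norm f \<le> 1" "z \<in> ball 0 1"
  shows "norm (f z) \<le> 1"
proof -
  from assms(1) have "bounded (f ` ball 0 1)" by (simp add: Hinf_def)
  then obtain B where B: "\<And>x. x \<in> f ` ball 0 1 \<Longrightarrow> norm x \<le> B" by (auto simp: bounded_iff)
  have "bdd_above ((\<lambda>z. norm (f z)) ` ball 0 1)"
    by (rule bdd_aboveI2[where M=B]) (use B in auto)
  then have "norm (f z) \<le> hinf_norm f"
    unfolding hinf_norm_def by (rule cSUP_upper[OF assms(3)])
  then show ?thesis using assms(2) by simp
qed

lemma upper_bound:
  assumes a: "\<alpha> \<ge> 1"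
  shows "cesaro_opnorm \<alpha> \<le> 4"
  unfolding cesaro_opnorm_def
proof (rule SUP_least)
  fix f assume "f \<in> {f \<in> Hinf. hinf_norm f \<le> 1}"
  then have fH: "f \<in> Hinf" and fn: "hinf_norm f \<le> 1" by auto
  have hol: "f holomorphic_on ball 0 1" using fH by (simp add: Hinf_def)
  have bd: "\<And>z. z \<in> ball 0 1 \<Longrightarrow> norm (f z) \<le> 1" using hinf_pointwise[OF fH fn] .
  have g0: "norm (cesaro f 0) \<le> 1" using bd[of 0] by (simp add: cesaro_def)
  have S: "(SUP z\<in>ball 0 1. ereal ((1 - (norm z)\<^sup>2) powr \<alpha> * norm (deriv (cesaro f) z))) \<le> ereal 3"
  proof (rule SUP_least)
    fix z :: complex assume z: "z \<in> ball 0 1"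
    define r where "r = norm z"
    have r: "0 \<le> r" "r < 1" using z by (auto simp: r_def)
    have q: "0 < 1 - r^2" "1 - r^2 \<le> 1" using r by (auto simp: abs_square_less_1)
    have p: "(1 - r^2) powr \<alpha> \<le> 1 - r^2" by (rule powr_le_one_le[OF q a])
    have d: "norm (deriv (cesaro f) z) \<le> (2 + r) / (1 - r^2)"
      using cesaro_deriv_bound[OF hol bd z] by (simp add: r_def)
    have "(1 - r^2) powr \<alpha> * norm (deriv (cesaro f) z) \<le> (1 - r^2) * ((2 + r) / (1 - r^2))"
      by (rule mult_mono[OF p d]) (use q in auto)
    also have "\<dots> = 2 + r" using q by simp
    also have "\<dots> \<le> 3" using r by simp
    finally show "ereal ((1 - (norm z)\<^sup>2) powr \<alpha> * norm (deriv (cesaro f) z)) \<le> ereal 3"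
      by (simp add: r_def)
  qed
  have "bloch_norm \<alpha> (cesaro f) \<le> ereal 1 + ereal 3"
    unfolding bloch_norm_def by (rule add_mono) (use g0 S in auto)
  then show "bloch_norm \<alpha> (cesaro f) \<le> 4" by simp
qed


abbreviation S1 :: "real \<Rightarrow> ereal" where
  "S1 \<alpha> \<equiv> (SUP z\<in>ball 0 1. ereal ((1 - (norm z)\<^sup>2) powr \<alpha> * norm (deriv (cesaro (\<lambda>_. 1)) z)))"

lemma lower_base: "ereal 1 + S1 \<alpha> \<le> cesaro_opnorm \<alpha>"
proof -
  have "bloch_norm \<alpha> (cesaro (\<lambda>_. 1)) \<le> cesaro_opnorm \<alpha>"
    unfolding cesaro_opnorm_def by (rule SUP_upper[OF one_in_ball_set])
  then show ?thesis by (simp add: bloch_norm_def cesaro_one_0)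
qed

lemma S1_half: "ereal (1/2) \<le> S1 \<alpha>"
proof -
  have "ereal ((1 - (norm (0::complex))\<^sup>2) powr \<alpha> * norm (deriv (cesaro (\<lambda>_. 1)) 0)) \<le> S1 \<alpha>"
    by (rule SUP_upper) simp
  then show ?thesis by (simp add: deriv_cesaro_one_0)
qed

lemma S1_val:
  assumes x: "0 < x" "x < 1"
  shows "ereal ((1 - x^2) powr \<alpha> * Jf x) \<le> S1 \<alpha>"
proof -
  have z: "complex_of_real x \<in> ball 0 1" using x by simp
  have "ereal ((1 - (norm (complex_of_real x))\<^sup>2) powr \<alpha> * norm (deriv (cesaro (\<lambda>_. 1)) (complex_of_real x))) \<le> S1 \<alpha>"
    by (rule SUP_upper[OF z])
  then show ?thesis using x J_nonneg[OF x] by (simp add: deriv_cesaro_one_real)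
qed

lemma S1_one: "ereal 2 \<le> S1 1"
proof (rule tendsto_le[of "at_left (1::real)" "\<lambda>_. S1 1" "S1 1" "\<lambda>x. ereal ((1 - x^2) * Jf x)"])
  show "at_left (1::real) \<noteq> bot" by simp
  show "((\<lambda>_. S1 1) \<longlongrightarrow> S1 1) (at_left 1)" by simp
  have "((\<lambda>x::real. (1 - x^2) * ((1 / x^2) * (x / (1 - x) + ln (1 - x)))) \<longlongrightarrow> 2) (at_left 1)"
    by real_asymp
  then show "((\<lambda>x. ereal ((1 - x^2) * Jf x)) \<longlongrightarrow> ereal 2) (at_left 1)"
    unfolding Jf_def by (rule tendsto_ereal)
  show "\<forall>\<^sub>F x in at_left 1. ereal ((1 - x^2) * Jf x) \<le> S1 1"
    using eventually_at_left_real[of 0 "1::real", OF zero_less_one]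
  proof (rule eventually_mono)
    fix x :: real assume "x \<in> {0<..<1}"
    then have x: "0 < x" "x < 1" by auto
    have "0 \<le> 1 - x^2" using x by (simp add: abs_square_le_1)
    then show "ereal ((1 - x^2) * Jf x) \<le> S1 1" using S1_val[OF x, of 1] by simp
  qed
qed

lemma S1_small:
  assumes a: "0 < \<alpha>" "\<alpha> < 1"
  shows "S1 \<alpha> = \<infinity>"
proof -
  have "\<infinity> \<le> S1 \<alpha>"
  proof (rule tendsto_le[of "at_left (1::real)" "\<lambda>_. S1 \<alpha>" "S1 \<alpha>" "\<lambda>x. ereal ((1 - x^2) powr \<alpha> * Jf x)"])
    show "at_left (1::real) \<noteq> bot" by simp
    show "((\<lambda>_. S1 \<alpha>) \<longlongrightarrow> S1 \<alpha>) (at_left 1)" by simp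
    have "filterlim (\<lambda>x::real. (1 - x^2) powr \<alpha> * ((1 / x^2) * (x / (1 - x) + ln (1 - x)))) at_top (at_left 1)"
      using a by real_asymp
    then show "((\<lambda>x. ereal ((1 - x^2) powr \<alpha> * Jf x)) \<longlongrightarrow> \<infinity>) (at_left 1)"
      unfolding Jf_def tendsto_PInfty_eq_at_top .
    show "\<forall>\<^sub>F x in at_left 1. ereal ((1 - x^2) powr \<alpha> * Jf x) \<le> S1 \<alpha>"
      using eventually_at_left_real[of 0 "1::real"]
      by (rule eventually_mono) (use S1_val in auto)
  qed
  then show ?thesis by simp
qed

theorem theorem7p1:
  fixes \<alpha> :: real
  shows "(\<alpha> = 1 \<longrightarrow> 3 \<le> cesaro_opnorm \<alpha> \<and> cesaro_opnorm \<alpha> \<le> 4)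
       \<and> (\<alpha> > 1 \<longrightarrow> ereal (3/2) \<le> cesaro_opnorm \<alpha> \<and> cesaro_opnorm \<alpha> \<le> 4)
       \<and> (0 < \<alpha> \<and> \<alpha> < 1 \<longrightarrow> cesaro_opnorm \<alpha> = \<infinity>)"
proof (intro conjI impI)
  assume "\<alpha> = 1"
  then show "cesaro_opnorm \<alpha> \<le> 4" using upper_bound by simp
  have "ereal 1 + ereal 2 \<le> ereal 1 + S1 1" by (rule add_left_mono[OF S1_one])
  also have "\<dots> \<le> cesaro_opnorm 1" by (rule lower_base)
  finally show "3 \<le> cesaro_opnorm \<alpha>" using \<open>\<alpha> = 1\<close> by simp
next
  assume "\<alpha> > 1"
  then show "cesaro_opnorm \<alpha> \<le> 4" using upper_bound by simp
  have "ereal 1 + ereal (1/2) \<le> ereal 1 + S1 \<alpha>" by (rule add_left_mono[OF S1_half])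
  also have "\<dots> \<le> cesaro_opnorm \<alpha>" by (rule lower_base)
  finally show "ereal (3/2) \<le> cesaro_opnorm \<alpha>" by simp
next
  assume a: "0 < \<alpha> \<and> \<alpha> < 1"
  have "ereal 1 + S1 \<alpha> \<le> cesaro_opnorm \<alpha>" by (rule lower_base)
  then show "cesaro_opnorm \<alpha> = \<infinity>" using S1_small[of \<alpha>] a by simp
qed

end
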